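(* Let $k$ be a commutative ring containing $1/2$ and let $R$ be a smooth commutative $k$-algebra such that $\mathrm{Der}_k(R)$ is free with a basis $\tau_1,\dots,\tau_n$ of pairwise commuting derivations, with dual basis $\omega_1,\dots,\omega_n$ of $\Omega^1_{R/k}$ (so $df=\sum_r\tau_r(f)\omega_r$). Let $g=(g^{ij}),g'=(g'^{ij})\in GL_n(R)$ be such that $\tau'_i=g^{ij}\tau_j$ pairwise commute and $\tau''_i=g'^{ij}\tau'_j$ pairwise commute; let $(\omega'_i)$, $(\omega''_i)$ be the bases of $\Omega^1_{R/k}$ dual to $(\tau'_i)$, $(\tau''_i)$. Let $A,A'\in GL_m(R)$. For a basis $(\sigma_i)$ of commuting derivations, $G\in GL_n(R)$ and $B\in GL_m(R)$ define (summation over repeated indices) $$G^{i\alpha\gamma}(\sigma;G,B)=G^{iq}\sigma_q\big((B^{-1})^{\alpha\mu}\big)B^{\mu\gamma},$$ $$H^{ij}(\sigma;G,B)=\sigma_j\big(G^{i\nu\nu}(\sigma;G,B)\big)+\tfrac12 G^{iq}\sigma_j\big((B^{-1})^{\mu\beta}\big)B^{\beta\gamma}\sigma_q\big((B^{-1})^{\gamma\nu}\big)B^{\nu\mu}.$$ Put $h^{ij}=H^{ij}(\tau;g,A)$, $h'^{ij}=H^{ij}(\tau';g',A')$, $h''^{ij}=H^{ij}(\tau;g'g,A'A)$, $g^{p\mu\mu}=G^{p\mu\mu}(\tau;g,A)$, $g'^{i\alpha\gamma}=G^{i\alpha\gamma}(\tau';g',A')$, and define for each $i$ the $1$-form $$\mathfrak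 a_i=g'^{ip}h^{pr}\omega_r+g^{p\mu\mu}\,dg'^{ip}+g'^{i\alpha\gamma}A^{\gamma\beta}\,d\big((A^{-1})^{\beta\alpha}\big)+h'^{ip}\omega'_p-h''^{ir}\omega_r.$$ Then $$\mathfrak a_i=\tfrac12\,\mathrm{tr}\big\{A'^{-1}\tau''_i(A')\,\tau''_r(A)A^{-1}-A'^{-1}\tau''_r(A')\,\tau''_i(A)A^{-1}\big\}\,\omega''_r.$$
   Context: $(B^{-1})^{\alpha\beta}$ is the $(\alpha,\beta)$ entry of $B^{-1}$; $\tau(A)$ for a matrix $A$ means entrywise application of the derivation $\tau$. Repeated indices are summed. *)

theory Defs
  imports Main
begin

text \<open>R is modelled by a type 'a of class comm_ring_1, k by a type 'k of class comm_ring_1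
  together with the structure map phi : k \<rightarrow> R (a ring homomorphism).
  Index sets {1..n}, {1..m} are rendered as {..<n}, {..<m}; matrices are functions
  nat \<Rightarrow> nat \<Rightarrow> 'a of which only the entries with indices below the size matter.
  Since Omega^1_{R/k} is free with basis omega_1..omega_n, a 1-form is represented by its
  coordinate vector (nat \<Rightarrow> 'a) with respect to omega; then df has coordinates (tau_r f)_r.\<close>

definition is_ring_hom :: "('k::comm_ring_1 \<Rightarrow> 'a::comm_ring_1) \<Rightarrow> bool" where
  "is_ring_hom phi \<longleftrightarrow> phi 1 = 1 \<and> (\<forall>x y. phi (x + y) = phi x + phi y)
      \<and> (\<forall>x y. phi (x * y) = phi x * phi y)"

definition is_kder :: "('k::comm_ring_1 \<Rightarrow> 'a::comm_ring_1) \<Rightarrow> ('a \<Rightarrow> 'a) \<Rightarrow> bool" where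
  "is_kder phi D \<longleftrightarrow> (\<forall>x y. D (x + y) = D x + D y)
      \<and> (\<forall>x y. D (x * y) = x * D y + y * D x)
      \<and> (\<forall>c x. D (phi c * x) = phi c * D x)"

definition der_basis :: "('k::comm_ring_1 \<Rightarrow> 'a::comm_ring_1) \<Rightarrow> nat \<Rightarrow> (nat \<Rightarrow> 'a \<Rightarrow> 'a) \<Rightarrow> bool" where
  "der_basis phi n tau \<longleftrightarrow> (\<forall>r<n. is_kder phi (tau r))
      \<and> (\<forall>D. is_kder phi D \<longrightarrow> (\<exists>c. \<forall>f. D f = (\<Sum>r<n. c r * tau r f)))
      \<and> (\<forall>c. (\<forall>f. (\<Sum>r<n. c r * tau r f) = 0) \<longrightarrow> (\<forall>r<n. c r = 0))"

definition commuting :: "nat \<Rightarrow> (nat \<Rightarrow> 'a \<Rightarrow> 'a) \<Rightarrow> bool" where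
  "commuting n sigma \<longleftrightarrow> (\<forall>i<n. \<forall>j<n. sigma i \<circ> sigma j = sigma j \<circ> sigma i)"

definition mmul :: "nat \<Rightarrow> (nat \<Rightarrow> nat \<Rightarrow> 'a::comm_ring_1) \<Rightarrow> (nat \<Rightarrow> nat \<Rightarrow> 'a) \<Rightarrow> nat \<Rightarrow> nat \<Rightarrow> 'a" where
  "mmul n B C = (\<lambda>i j. \<Sum>k<n. B i k * C k j)"

definition mat_inverse :: "nat \<Rightarrow> (nat \<Rightarrow> nat \<Rightarrow> 'a::comm_ring_1) \<Rightarrow> (nat \<Rightarrow> nat \<Rightarrow> 'a) \<Rightarrow> bool" where
  "mat_inverse n B C \<longleftrightarrow> (\<forall>i<n. \<forall>j<n. mmul n B C i j = (if i = j then 1 else 0)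
                                   \<and> mmul n C B i j = (if i = j then 1 else 0))"

definition change_der :: "nat \<Rightarrow> (nat \<Rightarrow> nat \<Rightarrow> 'a::comm_ring_1) \<Rightarrow> (nat \<Rightarrow> 'a \<Rightarrow> 'a) \<Rightarrow> nat \<Rightarrow> 'a \<Rightarrow> 'a" where
  "change_der n G sigma = (\<lambda>i f. \<Sum>j<n. G i j * sigma j f)"

text \<open>w p (as omega-coordinates) is the basis of Omega^1 dual to the derivations
  G^{ir} tau_r, i.e. <w p, G^{ir} tau_r> = delta_{pi}.\<close>
definition dual_coords :: "nat \<Rightarrow> (nat \<Rightarrow> nat \<Rightarrow> 'a::comm_ring_1) \<Rightarrow> (nat \<Rightarrow> nat \<Rightarrow> 'a) \<Rightarrow> bool" where
  "dual_coords n G w \<longleftrightarrow> (\<forall>p<n. \<forall>i<n. (\<Sum>r<n. w p r * G i r) = (if p = i then 1 else 0))"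

definition Gt :: "nat \<Rightarrow> nat \<Rightarrow> (nat \<Rightarrow> 'a::comm_ring_1 \<Rightarrow> 'a) \<Rightarrow> (nat \<Rightarrow> nat \<Rightarrow> 'a)
    \<Rightarrow> (nat \<Rightarrow> nat \<Rightarrow> 'a) \<Rightarrow> (nat \<Rightarrow> nat \<Rightarrow> 'a) \<Rightarrow> nat \<Rightarrow> nat \<Rightarrow> nat \<Rightarrow> 'a" where
  "Gt n m sigma G B Binv i \<alpha> \<gamma> = (\<Sum>q<n. \<Sum>\<mu><m. G i q * sigma q (Binv \<alpha> \<mu>) * B \<mu> \<gamma>)"

text \<open>H^{ij}(sigma; G, B), with Binv = B^{-1} and hf = 1/2.\<close>
definition Ht :: "nat \<Rightarrow> nat \<Rightarrow> 'a::comm_ring_1 \<Rightarrow> (nat \<Rightarrow> 'a \<Rightarrow> 'a) \<Rightarrow> (nat \<Rightarrow> nat \<Rightarrow> 'a)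
    \<Rightarrow> (nat \<Rightarrow> nat \<Rightarrow> 'a) \<Rightarrow> (nat \<Rightarrow> nat \<Rightarrow> 'a) \<Rightarrow> nat \<Rightarrow> nat \<Rightarrow> 'a" where
  "Ht n m hf sigma G B Binv i j =
     sigma j (\<Sum>\<nu><m. Gt n m sigma G B Binv i \<nu> \<nu>)
     + hf * (\<Sum>q<n. \<Sum>\<mu><m. \<Sum>\<beta><m. \<Sum>\<gamma><m. \<Sum>\<nu><m.
              G i q * sigma j (Binv \<mu> \<beta>) * B \<beta> \<gamma> * sigma q (Binv \<gamma> \<nu>) * B \<nu> \<mu>)"

end

theory Submission
  imports Defs
begin

definition tr :: "nat \<Rightarrow> (nat \<Rightarrow> nat \<Rightarrow> 'a::comm_ring_1) \<Rightarrow> 'a" where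
  "tr m X = (\<Sum>a<m. X a a)"

definition eqm :: "nat \<Rightarrow> (nat \<Rightarrow> nat \<Rightarrow> 'a) \<Rightarrow> (nat \<Rightarrow> nat \<Rightarrow> 'a) \<Rightarrow> bool" where
  "eqm m X Y \<longleftrightarrow> (\<forall>a<m. \<forall>b<m. X a b = Y a b)"

definition idm :: "nat \<Rightarrow> nat \<Rightarrow> 'a::comm_ring_1" where
  "idm a b = (if a = b then 1 else 0)"

definition dm :: "('a \<Rightarrow> 'a) \<Rightarrow> (nat \<Rightarrow> nat \<Rightarrow> 'a) \<Rightarrow> nat \<Rightarrow> nat \<Rightarrow> 'a" where
  "dm D X = (\<lambda>a b. D (X a b))"

definition der :: "('a::comm_ring_1 \<Rightarrow> 'a) \<Rightarrow> bool" where
  "der D \<longleftrightarrow> (\<forall>x y. D (x + y) = D x + D y) \<and> (\<forall>x y. D (x * y) = x * D y + y * D x)"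

lemma eqm_refl[simp]: "eqm m X X" by (simp add: eqm_def)
lemma eqm_sym: "eqm m X Y \<Longrightarrow> eqm m Y X" by (simp add: eqm_def)
lemma eqm_trans: "eqm m X Y \<Longrightarrow> eqm m Y Z \<Longrightarrow> eqm m X Z" by (simp add: eqm_def)

lemma mmul_assoc: "mmul m (mmul m X Y) Z = mmul m X (mmul m Y Z)"
  unfolding mmul_def
  by (auto simp: sum_distrib_left sum_distrib_right mult.assoc intro!: ext sum.swap)

lemma tr_comm: "tr m (mmul m X Y) = tr m (mmul m Y X)"
  unfolding mmul_def tr_def by (subst sum.swap) (simp add: mult.commute)

lemma mmul_cong: "eqm m X X' \<Longrightarrow> eqm m Y Y' \<Longrightarrow> eqm m (mmul m X Y) (mmul m X' Y')"
  unfolding eqm_def mmul_def by (auto intro!: sum.cong)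

lemma tr_cong: "eqm m X X' \<Longrightarrow> tr m X = tr m X'"
  unfolding eqm_def tr_def by auto

lemma tr_mmul_cong: "eqm m X X' \<Longrightarrow> eqm m Y Y' \<Longrightarrow> tr m (mmul m X Y) = tr m (mmul m X' Y')"
  by (intro tr_cong mmul_cong)

lemma mmul_idm_left: "eqm m (mmul m idm X) X"
  unfolding eqm_def mmul_def idm_def by (simp add: if_distrib[where f="\<lambda>x. x * _"] cong: if_cong)

lemma mmul_idm_right: "eqm m (mmul m X idm) X"
  unfolding eqm_def mmul_def idm_def by (auto simp: if_distrib cong: if_cong)

lemma inv_left: "mat_inverse m B C \<Longrightarrow> eqm m (mmul m C B) idm"
  unfolding mat_inverse_def eqm_def idm_def by auto
lemma inv_right: "mat_inverse m B C \<Longrightarrow> eqm m (mmul m B C) idm"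
  unfolding mat_inverse_def eqm_def idm_def by auto

lemma der_add: "der D \<Longrightarrow> D (x + y) = D x + D y" by (simp add: der_def)
lemma der_mult: "der D \<Longrightarrow> D (x * y) = x * D y + y * D x" by (simp add: der_def)
lemma der_0: "der D \<Longrightarrow> D 0 = 0"
  using der_add[of D 0 0] by simp
lemma der_1: "der D \<Longrightarrow> D 1 = 0"
  using der_mult[of D 1 1] by simp
lemma der_uminus: "der D \<Longrightarrow> D (- x) = - D x"
  using der_add[of D x "-x"] der_0[of D] by (simp add: eq_neg_iff_add_eq_0 add.commute)
lemma der_diff: "der D \<Longrightarrow> D (x - y) = D x - D y"
  using der_add[of D x "-y"] der_uminus[of D y] by simp
lemma der_sum: "der D \<Longrightarrow> D (\<Sum>k\<in>K. f k) = (\<Sum>k\<in>K. D (f k))"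
  by (induction K rule: infinite_finite_induct) (auto simp: der_0 der_add)

lemma der_comb: "(\<And>q. q < n \<Longrightarrow> der (D q)) \<Longrightarrow> der (\<lambda>f. \<Sum>q<n. c q * D q f)"
  unfolding der_def by (auto simp: sum.distrib sum_distrib_left algebra_simps)

lemma dm_mmul: "der D \<Longrightarrow> dm D (mmul m X Y) = (\<lambda>a b. mmul m (dm D X) Y a b + mmul m X (dm D Y) a b)"
  unfolding dm_def mmul_def by (auto simp: der_sum der_mult sum.distrib algebra_simps intro!: ext)

lemma dm_inv: assumes "der D" "mat_inverse m B C"
  shows "eqm m (mmul m (dm D C) B) (\<lambda>a b. - mmul m C (dm D B) a b)"
proof -
  have "eqm m (dm D (mmul m C B)) (\<lambda>a b. 0)"
    using inv_left[OF assms(2)] unfolding eqm_def dm_def idm_def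
    by (auto simp: der_0[OF assms(1)] der_1[OF assms(1)])
  then show ?thesis unfolding dm_mmul[OF assms(1)] eqm_def
    by (auto simp: eq_neg_iff_add_eq_0)
qed

lemma mmul_comb_left: "mmul m (\<lambda>a b. \<Sum>q<n. c q * M q a b) B = (\<lambda>a b. \<Sum>q<n. c q * mmul m (M q) B a b)"
  unfolding mmul_def by (auto simp: sum_distrib_left sum_distrib_right mult.assoc intro!: ext sum.swap)
lemma mmul_comb_right: "mmul m B (\<lambda>a b. \<Sum>q<n. c q * M q a b) = (\<lambda>a b. \<Sum>q<n. c q * mmul m B (M q) a b)"
  unfolding mmul_def by (auto simp: sum_distrib_left sum_distrib_right mult.assoc mult.left_commute intro!: ext sum.swap)
lemma tr_comb: "tr m (\<lambda>a b. \<Sum>q<n. c q * M q a b) = (\<Sum>q<n. c q * tr m (M q))"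
  unfolding tr_def by (auto simp: sum_distrib_left intro!: sum.swap)
lemma dm_comb: "dm (\<lambda>f. \<Sum>q<n. c q * D q f) X = (\<lambda>a b. \<Sum>q<n. c q * dm (D q) X a b)"
  unfolding dm_def by simp
lemma mmul_add_left: "mmul m (\<lambda>a b. X a b + Y a b) B = (\<lambda>a b. mmul m X B a b + mmul m Y B a b)"
  unfolding mmul_def by (auto simp: sum.distrib algebra_simps intro!: ext)
lemma mmul_add_right: "mmul m B (\<lambda>a b. X a b + Y a b) = (\<lambda>a b. mmul m B X a b + mmul m B Y a b)"
  unfolding mmul_def by (auto simp: sum.distrib algebra_simps intro!: ext)
lemma mmul_neg_left: "mmul m (\<lambda>a b. - X a b) B = (\<lambda>a b. - mmul m X B a b)"
  unfolding mmul_def by (auto simp: sum_negf intro!: ext)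
lemma tr_add: "tr m (\<lambda>a b. X a b + Y a b) = tr m X + tr m Y"
  unfolding tr_def by (simp add: sum.distrib)
lemma tr_neg: "tr m (\<lambda>a b. - X a b) = - tr m X"
  unfolding tr_def by (simp add: sum_negf)

lemma GtE: "Gt n m \<sigma> G B Binv i \<alpha> c = (\<Sum>q<n. G i q * mmul m (dm (\<sigma> q) Binv) B \<alpha> c)"
  unfolding Gt_def mmul_def dm_def by (simp add: sum_distrib_left mult.assoc)

lemma GsE: "(\<Sum>\<nu><m. Gt n m \<sigma> G B Binv i \<nu> \<nu>) = (\<Sum>q<n. G i q * tr m (mmul m (dm (\<sigma> q) Binv) B))"
  unfolding GtE tr_def by (simp add: sum_distrib_left; rule sum.swap)

lemma HtE: "Ht n m hf \<sigma> G B Binv i j = \<sigma> j (\<Sum>q<n. G i q * tr m (mmul m (dm (\<sigma> q) Binv) B))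
   + hf * (\<Sum>q<n. G i q * tr m (mmul m (mmul m (dm (\<sigma> j) Binv) B) (mmul m (dm (\<sigma> q) Binv) B)))"
proof -
  have "(\<Sum>\<mu><m. \<Sum>\<beta><m. \<Sum>\<gamma><m. \<Sum>\<nu><m.
              G i q * \<sigma> j (Binv \<mu> \<beta>) * B \<beta> \<gamma> * \<sigma> q (Binv \<gamma> \<nu>) * B \<nu> \<mu>)
     = G i q * tr m (mmul m (mmul m (dm (\<sigma> j) Binv) B) (mmul m (dm (\<sigma> q) Binv) B))" for q
  proof -
    have "tr m (mmul m (mmul m (dm (\<sigma> j) Binv) B) (mmul m (dm (\<sigma> q) Binv) B))
       = (\<Sum>\<mu><m. \<Sum>\<gamma><m. \<Sum>\<nu><m. \<Sum>\<beta><m. \<sigma> j (Binv \<mu> \<beta>) * B \<beta> \<gamma> * \<sigma> q (Binv \<gamma> \<nu>) * B \<nu> \<mu>)"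
      unfolding tr_def mmul_def dm_def by (simp add: sum_distrib_left sum_distrib_right mult.assoc)
    also have "\<dots> = (\<Sum>\<mu><m. \<Sum>\<gamma><m. \<Sum>\<beta><m. \<Sum>\<nu><m. \<sigma> j (Binv \<mu> \<beta>) * B \<beta> \<gamma> * \<sigma> q (Binv \<gamma> \<nu>) * B \<nu> \<mu>)"
      by (rule sum.cong[OF refl], rule sum.cong[OF refl], rule sum.swap)
    also have "\<dots> = (\<Sum>\<mu><m. \<Sum>\<beta><m. \<Sum>\<gamma><m. \<Sum>\<nu><m. \<sigma> j (Binv \<mu> \<beta>) * B \<beta> \<gamma> * \<sigma> q (Binv \<gamma> \<nu>) * B \<nu> \<mu>)"
      by (rule sum.cong[OF refl], rule sum.swap)
    finally show ?thesis by (simp add: sum_distrib_left mult.assoc)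
  qed
  then show ?thesis unfolding Ht_def GsE by (simp add: sum_distrib_left)
qed

lemma C1: "(\<Sum>p<(n::nat). a p * (\<Sum>q<n. b p q * c q)) = (\<Sum>q<n. (\<Sum>p<n. a p * b p q) * (c q::'a::comm_ring_1))"
  unfolding sum_distrib_left sum_distrib_right by (subst sum.swap) (simp add: mult_ac)

lemma C2: assumes "s < (n::nat)" "\<And>q. q < n \<Longrightarrow> (\<Sum>p<n. w p s * b p q) = (if s = q then 1 else (0::'a::comm_ring_1))"
  shows "(\<Sum>p<n. (\<Sum>q<n. b p q * c q) * w p s) = c s"
proof -
  have "(\<Sum>p<n. (\<Sum>q<n. b p q * c q) * w p s) = (\<Sum>q<n. (\<Sum>p<n. w p s * b p q) * c q)"
    unfolding sum_distrib_left sum_distrib_right by (subst sum.swap) (simp add: mult_ac)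
  also have "\<dots> = (\<Sum>q<n. (if s = q then c q else 0))"
    by (rule sum.cong[OF refl]) (simp add: assms(2))
  finally show ?thesis using assms(1) by (simp add: sum.delta')
qed

lemma dual_col: assumes "mat_inverse n G Ginv" "dual_coords n G w" "s < n" "q < n"
  shows "(\<Sum>p<n. w p s * G p q) = (if s = q then 1 else 0)"
proof -
  have w: "w p s = Ginv s p" if "p < n" for p
  proof -
    have "w p s = (\<Sum>r<n. w p r * (if r = s then 1 else 0))" using assms(3) by (simp add: if_distrib cong: if_cong)
    also have "\<dots> = (\<Sum>r<n. w p r * (\<Sum>k<n. Ginv s k * G k r))"
      using assms(1,3) unfolding mat_inverse_def mmul_def by (intro sum.cong) (auto simp: eq_commute[of r s for r])
    also have "\<dots> = (\<Sum>k<n. Ginv s k * (\<Sum>r<n. w p r * G k r))"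
      by (simp add: sum_distrib_left mult_ac; rule sum.swap)
    also have "\<dots> = (\<Sum>k<n. Ginv s k * (if p = k then 1 else 0))"
      using assms(2) that unfolding dual_coords_def by (intro sum.cong) auto
    finally show ?thesis using that by (simp add: if_distrib cong: if_cong)
  qed
  have "(\<Sum>p<n. w p s * G p q) = (\<Sum>p<n. Ginv s p * G p q)" by (rule sum.cong) (auto simp: w)
  then show ?thesis using assms(1,3,4) unfolding mat_inverse_def mmul_def by auto
qed

lemma cancel_l: "mat_inverse m B C \<Longrightarrow> eqm m (mmul m B (mmul m C W)) W"
  by (metis eqm_trans inv_right mmul_assoc mmul_cong eqm_refl mmul_idm_left)
lemma cancel_l2: "mat_inverse m B C \<Longrightarrow> eqm m (mmul m C (mmul m B W)) W"
  by (metis eqm_trans inv_left mmul_assoc mmul_cong eqm_refl mmul_idm_left)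
lemma cancel_r: "mat_inverse m B C \<Longrightarrow> eqm m (mmul m W (mmul m B C)) W"
  by (metis eqm_trans inv_right mmul_cong eqm_refl mmul_idm_right)
lemma cancel_r2: "mat_inverse m B C \<Longrightarrow> eqm m (mmul m W (mmul m C B)) W"
  by (metis eqm_trans inv_left mmul_cong eqm_refl mmul_idm_right)

lemma inv_sym: "mat_inverse m B C \<Longrightarrow> mat_inverse m C B"
  unfolding mat_inverse_def by auto

lemma mmul_neg_right: "mmul m B (\<lambda>a b. - X a b) = (\<lambda>a b. - mmul m B X a b)"
  unfolding mmul_def by (auto simp: sum_negf intro!: ext)

lemma gamma_inv: assumes "mat_inverse n g ginv" "mat_inverse n g' g'inv"
  shows "mat_inverse n (mmul n g' g) (mmul n ginv g'inv)"
proof -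
  have 1: "eqm n (mmul n (mmul n g' g) (mmul n ginv g'inv)) idm"
    using eqm_trans[OF mmul_cong[OF eqm_refl cancel_l[OF assms(1)]] inv_right[OF assms(2)]]
    by (simp add: mmul_assoc)
  have 2: "eqm n (mmul n (mmul n ginv g'inv) (mmul n g' g)) idm"
    using eqm_trans[OF mmul_cong[OF eqm_refl cancel_l2[OF assms(2)]] inv_left[OF assms(1)]]
    by (simp add: mmul_assoc)
  show ?thesis using 1 2 unfolding mat_inverse_def eqm_def idm_def by auto
qed

definition Xm :: "nat \<Rightarrow> ('a::comm_ring_1 \<Rightarrow> 'a) \<Rightarrow> (nat \<Rightarrow> nat \<Rightarrow> 'a) \<Rightarrow> (nat \<Rightarrow> nat \<Rightarrow> 'a) \<Rightarrow> nat \<Rightarrow> nat \<Rightarrow> 'a" where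
  "Xm m D Binv B = mmul m (dm D Binv) B"

lemma eqm_add: "eqm m X X' \<Longrightarrow> eqm m Y Y' \<Longrightarrow> eqm m (\<lambda>a b. X a b + Y a b) (\<lambda>a b. X' a b + Y' a b)"
  unfolding eqm_def by auto

lemma eqm_neg: "eqm m X (\<lambda>a b. - (Y a b::'a::comm_ring_1)) \<Longrightarrow> eqm m (\<lambda>a b. - X a b) Y"
  unfolding eqm_def by auto

lemma L_X2: assumes "der D" "mat_inverse m A' A'inv"
  shows "eqm m (Xm m D (mmul m Ainv A'inv) (mmul m A' A))
     (\<lambda>a b. Xm m D Ainv A a b + mmul m Ainv (mmul m (Xm m D A'inv A') A) a b)"
  unfolding Xm_def dm_mmul[OF assms(1)] mmul_add_left
  by (rule eqm_add) (simp_all add: mmul_assoc mmul_cong[OF eqm_refl cancel_l2[OF assms(2)]])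

lemma L_trZ: assumes "mat_inverse m A Ainv"
  shows "tr m (mmul m Ainv (mmul m W A)) = tr m W"
proof -
  have "tr m (mmul m Ainv (mmul m W A)) = tr m (mmul m (mmul m W A) Ainv)" by (rule tr_comm)
  also have "\<dots> = tr m (mmul m W (mmul m A Ainv))" by (simp add: mmul_assoc)
  also have "\<dots> = tr m W" by (rule tr_cong[OF cancel_r[OF assms]])
  finally show ?thesis .
qed

lemma L_ZZ: assumes "mat_inverse m A Ainv"
  shows "tr m (mmul m (mmul m Ainv (mmul m Y1 A)) (mmul m Ainv (mmul m Y2 A))) = tr m (mmul m Y1 Y2)"
proof -
  have "tr m (mmul m (mmul m Ainv (mmul m Y1 A)) (mmul m Ainv (mmul m Y2 A)))
      = tr m (mmul m Ainv (mmul m Y1 (mmul m A (mmul m Ainv (mmul m Y2 A)))))"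
    by (simp add: mmul_assoc)
  also have "\<dots> = tr m (mmul m Ainv (mmul m Y1 (mmul m Y2 A)))"
    by (intro tr_mmul_cong eqm_refl mmul_cong cancel_l[OF assms])
  also have "\<dots> = tr m (mmul m Ainv (mmul m (mmul m Y1 Y2) A))" by (simp add: mmul_assoc)
  also have "\<dots> = tr m (mmul m Y1 Y2)" by (rule L_trZ[OF assms])
  finally show ?thesis .
qed

lemma L_T3form: "(\<Sum>\<alpha><m. \<Sum>\<gamma><m. \<Sum>\<beta><m. M \<alpha> \<gamma> * A \<gamma> \<beta> * D (Ainv \<beta> \<alpha>))
   = tr m (mmul m M (mmul m A (dm D Ainv)))"
  unfolding tr_def mmul_def dm_def by (simp add: sum_distrib_left mult.assoc)

lemma L_XZ: assumes "mat_inverse m A Ainv"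
  shows "tr m (mmul m Y1 (mmul m A (dm D2 Ainv))) = tr m (mmul m (Xm m D2 Ainv A) (mmul m Ainv (mmul m Y1 A)))"
proof -
  have e: "eqm m (mmul m (Xm m D2 Ainv A) Ainv) (dm D2 Ainv)"
    unfolding Xm_def by (simp add: mmul_assoc cancel_r[OF assms])
  let ?X = "Xm m D2 Ainv A"
  have "tr m (mmul m Y1 (mmul m A (dm D2 Ainv))) = tr m (mmul m Y1 (mmul m A (mmul m ?X Ainv)))"
    by (intro tr_mmul_cong eqm_refl mmul_cong eqm_sym[OF e])
  also have "\<dots> = tr m (mmul m (mmul m A (mmul m ?X Ainv)) Y1)" by (rule tr_comm)
  also have "\<dots> = tr m (mmul m A (mmul m ?X (mmul m Ainv Y1)))" by (simp add: mmul_assoc)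
  also have "\<dots> = tr m (mmul m (mmul m ?X (mmul m Ainv Y1)) A)" by (rule tr_comm)
  also have "\<dots> = tr m (mmul m ?X (mmul m Ainv (mmul m Y1 A)))" by (simp add: mmul_assoc)
  finally show ?thesis .
qed

lemma L_K: assumes "der D1" "der D2" "mat_inverse m A Ainv" "mat_inverse m A' A'inv"
  shows "(\<Sum>a<m. \<Sum>b<m. \<Sum>c<m. \<Sum>d<m. A'inv a b * D1 (A' b c) * D2 (A c d) * Ainv d a)
    = tr m (mmul m (Xm m D1 A'inv A') (mmul m A (dm D2 Ainv)))"
proof -
  have "(\<Sum>a<m. \<Sum>b<m. \<Sum>c<m. \<Sum>d<m. A'inv a b * D1 (A' b c) * D2 (A c d) * Ainv d a)
     = (\<Sum>a<m. \<Sum>c<m. \<Sum>b<m. \<Sum>d<m. A'inv a b * D1 (A' b c) * D2 (A c d) * Ainv d a)"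
    by (rule sum.cong[OF refl], rule sum.swap)
  also have "\<dots> = (\<Sum>a<m. \<Sum>c<m. \<Sum>d<m. \<Sum>b<m. A'inv a b * D1 (A' b c) * D2 (A c d) * Ainv d a)"
    by (rule sum.cong[OF refl], rule sum.cong[OF refl], rule sum.swap)
  also have "\<dots> = tr m (mmul m (mmul m A'inv (dm D1 A')) (mmul m (dm D2 A) Ainv))"
    unfolding tr_def mmul_def dm_def by (simp add: sum_distrib_left sum_distrib_right mult.assoc)
  also have "\<dots> = tr m (mmul m (\<lambda>a b. - Xm m D1 A'inv A' a b) (\<lambda>a b. - mmul m A (dm D2 Ainv) a b))"
    apply (intro tr_mmul_cong)
    subgoal using eqm_neg[OF dm_inv[OF assms(1,4)]] unfolding Xm_def by (rule eqm_sym)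
    subgoal by (rule dm_inv[OF assms(2) inv_sym[OF assms(3)]])
    done
  also have "\<dots> = tr m (mmul m (Xm m D1 A'inv A') (mmul m A (dm D2 Ainv)))"
    by (simp add: mmul_neg_left mmul_neg_right)
  finally show ?thesis .
qed

lemma C3: "(\<Sum>r<(n::nat). a r * (\<Sum>q<n. b q * c r q)) = (\<Sum>q<n. b q * (\<Sum>r<n. a r * (c r q::'a::comm_ring_1)))"
  unfolding sum_distrib_left by (subst sum.swap) (simp add: mult_ac)

lemma C4: "c * (\<Sum>q<(n::nat). b q * x q) = (\<Sum>q<n. b q * (c * (x q::'a::comm_ring_1)))"
  by (simp add: sum_distrib_left mult.left_commute)

lemma C34: "h * (\<Sum>r<(n::nat). a r * (\<Sum>q<n. b q * c r q)) = (\<Sum>q<n. b q * (h * (\<Sum>r<n. a r * (c r q::'a::comm_ring_1))))"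
  unfolding sum_distrib_left by (subst sum.swap) (simp add: mult_ac)

lemma fin: "x + y = (a::'a::comm_ring_1) \<Longrightarrow> hf + hf = 1 \<Longrightarrow>
  (x + hf * P1) + y + P2 + (b + hf * P4) - ((a + b) + hf * (P1 + P2 + P3 + P4)) = hf * (P2 - P3)"
proof -
  assume 1: "x + y = a" and 2: "hf + hf = 1"
  have "P2 = (hf + hf) * P2" using 2 by simp
  then show ?thesis using 1 by (simp add: algebra_simps)
qed

lemma kder_der: "is_kder phi D \<Longrightarrow> der D"
  unfolding is_kder_def der_def by auto

lemma Xm_comb: "Xm m (\<lambda>f. \<Sum>q<n. c q * D q f) Binv B = (\<lambda>a b. \<Sum>q<n. c q * Xm m (D q) Binv B a b)"
  unfolding Xm_def dm_comb mmul_comb_left ..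

theorem lemma5p5:
  fixes phi :: "'k::comm_ring_1 \<Rightarrow> 'a::comm_ring_1"
    and half :: 'k
    and n m :: nat
    and tau :: "nat \<Rightarrow> 'a \<Rightarrow> 'a"
    and g ginv g' g'inv w' w'' A Ainv A' A'inv :: "nat \<Rightarrow> nat \<Rightarrow> 'a"
    and i s :: nat
  assumes hom: "is_ring_hom phi"
    and half: "2 * half = 1"
    and basis: "der_basis phi n tau"
    and comm: "commuting n tau"
    and g_inv: "mat_inverse n g ginv"
    and g'_inv: "mat_inverse n g' g'inv"
    and comm': "commuting n (change_der n g tau)"
    and comm'': "commuting n (change_der n g' (change_der n g tau))"
    and dual': "dual_coords n g w'"
    and dual'': "dual_coords n (mmul n g' g) w''"
    and A_inv: "mat_inverse m A Ainv"
    and A'_inv: "mat_inverse m A' A'inv"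
    and i: "i < n" and s: "s < n"
  shows
   "(let hf = phi half;
         tau' = change_der n g tau;
         tau'' = change_der n g' tau';
         h = Ht n m hf tau g A Ainv;
         h' = Ht n m hf tau' g' A' A'inv;
         h'' = Ht n m hf tau (mmul n g' g) (mmul m A' A) (mmul m Ainv A'inv);
         gs = (\<lambda>p. \<Sum>\<mu><m. Gt n m tau g A Ainv p \<mu> \<mu>);
         gg' = Gt n m tau' g' A' A'inv
     in (\<Sum>p<n. g' i p * h p s)
        + (\<Sum>p<n. gs p * tau s (g' i p))
        + (\<Sum>\<alpha><m. \<Sum>\<gamma><m. \<Sum>\<beta><m. gg' i \<alpha> \<gamma> * A \<gamma> \<beta> * tau s (Ainv \<beta> \<alpha>))
        + (\<Sum>p<n. h' i p * w' p s)
        - h'' i s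
      = (\<Sum>r<n. hf *
           (\<Sum>a<m. \<Sum>b<m. \<Sum>c<m. \<Sum>d<m.
               A'inv a b * tau'' i (A' b c) * tau'' r (A c d) * Ainv d a
             - A'inv a b * tau'' r (A' b c) * tau'' i (A c d) * Ainv d a)
           * w'' r s))"
proof -
  define hf where "hf = phi half"
  define tau' where "tau' = change_der n g tau"
  define tau'' where "tau'' = change_der n g' tau'"
  define \<Gamma> where "\<Gamma> = mmul n g' g"
  define X where "X q = Xm m (tau q) Ainv A" for q
  define Y where "Y q = Xm m (tau q) A'inv A'" for q
  define Z where "Z q = mmul m Ainv (mmul m (Y q) A)" for q
  define t where "t q = tr m (X q)" for q
  define u where "u q = tr m (Y q)" for q
  define S where "S p = (\<Sum>q<n. g p q * t q)" for p
  define TXX where "TXX q = tr m (mmul m (X s) (X q))" for q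
  define TXZ where "TXZ q = tr m (mmul m (X s) (Z q))" for q
  define TZX where "TZX q = tr m (mmul m (Z s) (X q))" for q
  define TYY where "TYY q = tr m (mmul m (Y s) (Y q))" for q
  have hf2: "hf + hf = 1"
  proof -
    have ha: "\<And>x y. phi (x + y) = phi x + phi y" and h1: "phi 1 = 1"
      using hom unfolding is_ring_hom_def by blast+
    have "half + half = 1" using half by (metis mult_2)
    then have "phi (half + half) = 1" using h1 by simp
    then show ?thesis unfolding hf_def ha .
  qed
  have dtau: "der (tau q)" if "q < n" for q
    using basis that unfolding der_basis_def by (blast intro: kder_der)
  have tau'_eq: "tau' p = (\<lambda>f. \<Sum>q<n. g p q * tau q f)" for p
    unfolding tau'_def change_der_def ..
  have tau''_eq: "tau'' r = (\<lambda>f. \<Sum>q<n. \<Gamma> r q * tau q f)" for r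
    unfolding tau''_def change_der_def tau'_eq \<Gamma>_def mmul_def by (intro ext C1)
  have dtau'': "der (tau'' r)" for r
    unfolding tau''_eq by (rule der_comb[OF dtau])
  have w'd: "\<And>q. q < n \<Longrightarrow> (\<Sum>p<n. w' p s * g p q) = (if s = q then 1 else 0)"
    by (rule dual_col[OF g_inv dual' s])
  have w''d: "\<And>q. q < n \<Longrightarrow> (\<Sum>p<n. w'' p s * \<Gamma> p q) = (if s = q then 1 else 0)"
    unfolding \<Gamma>_def by (rule dual_col[OF gamma_inv[OF g_inv g'_inv] dual'' s])

  have T1: "(\<Sum>p<n. g' i p * Ht n m hf tau g A Ainv p s)
     = (\<Sum>p<n. g' i p * tau s (S p)) + hf * (\<Sum>q<n. \<Gamma> i q * TXX q)"
  proof -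
    have "(\<Sum>p<n. g' i p * Ht n m hf tau g A Ainv p s)
       = (\<Sum>p<n. g' i p * tau s (S p)) + (\<Sum>p<n. g' i p * (hf * (\<Sum>q<n. g p q * TXX q)))"
      unfolding HtE S_def t_def TXX_def X_def Xm_def by (simp add: distrib_left sum.distrib)
    also have "(\<Sum>p<n. g' i p * (hf * (\<Sum>q<n. g p q * TXX q))) = hf * (\<Sum>q<n. \<Gamma> i q * TXX q)"
    proof -
      have "(\<Sum>p<n. g' i p * (hf * (\<Sum>q<n. g p q * TXX q))) = (\<Sum>p<n. hf * (g' i p * (\<Sum>q<n. g p q * TXX q)))"
        by (simp only: mult.left_commute)
      also have "\<dots> = hf * (\<Sum>p<n. g' i p * (\<Sum>q<n. g p q * TXX q))"
        by (simp only: sum_distrib_left)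
      also have "\<dots> = hf * (\<Sum>q<n. \<Gamma> i q * TXX q)"
        unfolding C1 \<Gamma>_def mmul_def ..
      finally show ?thesis .
    qed
    finally show ?thesis .
  qed

  have T2: "(\<Sum>p<n. (\<Sum>\<mu><m. Gt n m tau g A Ainv p \<mu> \<mu>) * tau s (g' i p)) = (\<Sum>p<n. S p * tau s (g' i p))"
    unfolding GsE S_def t_def X_def Xm_def ..
  have T12: "(\<Sum>p<n. g' i p * tau s (S p)) + (\<Sum>p<n. S p * tau s (g' i p)) = tau s (\<Sum>q<n. \<Gamma> i q * t q)"
  proof -
    have "(\<Sum>p<n. g' i p * tau s (S p)) + (\<Sum>p<n. S p * tau s (g' i p)) = (\<Sum>p<n. tau s (g' i p * S p))"
      by (simp add: der_mult[OF dtau[OF s]] sum.distrib)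
    also have "\<dots> = tau s (\<Sum>p<n. g' i p * S p)" by (simp add: der_sum[OF dtau[OF s]])
    also have "(\<Sum>p<n. g' i p * S p) = (\<Sum>q<n. \<Gamma> i q * t q)"
      unfolding S_def C1 \<Gamma>_def mmul_def ..
    finally show ?thesis .
  qed
  have Y'_eq: "Xm m (tau' p) A'inv A' = (\<lambda>a b. \<Sum>q<n. g p q * Y q a b)" for p
    unfolding tau'_eq Xm_comb Y_def ..
  have T3: "(\<Sum>\<alpha><m. \<Sum>\<gamma><m. \<Sum>\<beta><m. Gt n m tau' g' A' A'inv i \<alpha> \<gamma> * A \<gamma> \<beta> * tau s (Ainv \<beta> \<alpha>))
     = (\<Sum>q<n. \<Gamma> i q * TXZ q)"
  proof -
    have gg0: "Gt n m tau' g' A' A'inv i a b = (\<Sum>q<n. \<Gamma> i q * Y q a b)" for a b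
    proof -
      have "Gt n m tau' g' A' A'inv i a b = (\<Sum>p<n. g' i p * Xm m (tau' p) A'inv A' a b)"
        unfolding GtE Xm_def ..
      then show ?thesis unfolding Y'_eq C1 \<Gamma>_def mmul_def .
    qed
    have gg: "Gt n m tau' g' A' A'inv i = (\<lambda>a b. \<Sum>q<n. \<Gamma> i q * Y q a b)"
      using gg0 by (intro ext)
    have "(\<Sum>\<alpha><m. \<Sum>\<gamma><m. \<Sum>\<beta><m. Gt n m tau' g' A' A'inv i \<alpha> \<gamma> * A \<gamma> \<beta> * tau s (Ainv \<beta> \<alpha>))
      = tr m (mmul m (\<lambda>a b. \<Sum>q<n. \<Gamma> i q * Y q a b) (mmul m A (dm (tau s) Ainv)))"
      unfolding gg by (rule L_T3form)
    then show ?thesis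
      unfolding mmul_comb_left tr_comb L_XZ[OF A_inv] TXZ_def Z_def X_def .
  qed
  have T4: "(\<Sum>p<n. Ht n m hf tau' g' A' A'inv i p * w' p s)
     = tau s (\<Sum>q<n. \<Gamma> i q * u q) + hf * (\<Sum>q<n. \<Gamma> i q * TYY q)"
  proof -
    define F where "F = (\<Sum>q<n. \<Gamma> i q * u q)"
    have F: "(\<Sum>r<n. g' i r * tr m (Xm m (tau' r) A'inv A')) = F"
      unfolding Y'_eq tr_comb F_def u_def C1 \<Gamma>_def mmul_def ..
    have h': "Ht n m hf tau' g' A' A'inv i p
       = (\<Sum>q<n. g p q * (tau q F + hf * (\<Sum>r<n. g' i r * tr m (mmul m (Y q) (Xm m (tau' r) A'inv A')))))" for p
    proof -
      have "Ht n m hf tau' g' A' A'inv i p = tau' p F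
          + hf * (\<Sum>r<n. g' i r * (\<Sum>q<n. g p q * tr m (mmul m (Y q) (Xm m (tau' r) A'inv A'))))"
        unfolding HtE Xm_def[symmetric] F
        unfolding Y'_eq[of p] mmul_comb_left tr_comb ..
      also have "\<dots> = (\<Sum>q<n. g p q * tau q F) +
          (\<Sum>q<n. g p q * (hf * (\<Sum>r<n. g' i r * tr m (mmul m (Y q) (Xm m (tau' r) A'inv A')))))"
        by (simp only: tau'_eq C34)
      finally show ?thesis by (simp only: distrib_left sum.distrib)
    qed
    have "(\<Sum>p<n. Ht n m hf tau' g' A' A'inv i p * w' p s)
       = tau s F + hf * (\<Sum>r<n. g' i r * tr m (mmul m (Y s) (Xm m (tau' r) A'inv A')))"
      unfolding h' by (rule C2[OF s]) (rule w'd)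
    also have "(\<Sum>r<n. g' i r * tr m (mmul m (Y s) (Xm m (tau' r) A'inv A'))) = (\<Sum>q<n. \<Gamma> i q * TYY q)"
      unfolding Y'_eq mmul_comb_right tr_comb TYY_def C1 \<Gamma>_def mmul_def ..
    finally show ?thesis unfolding F_def .
  qed

  have X2: "eqm m (Xm m (tau q) (mmul m Ainv A'inv) (mmul m A' A)) (\<lambda>a b. X q a b + Z q a b)" if "q < n" for q
    unfolding X_def Z_def Y_def by (rule L_X2[OF dtau[OF that] A'_inv])
  have trX2: "tr m (Xm m (tau q) (mmul m Ainv A'inv) (mmul m A' A)) = t q + u q" if "q < n" for q
    unfolding tr_cong[OF X2[OF that]] tr_add t_def u_def Z_def L_trZ[OF A_inv] ..
  have trXX2: "tr m (mmul m (Xm m (tau s) (mmul m Ainv A'inv) (mmul m A' A)) (Xm m (tau q) (mmul m Ainv A'inv) (mmul m A' A)))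
      = TXX q + TXZ q + TZX q + TYY q" if "q < n" for q
    unfolding tr_mmul_cong[OF X2[OF s] X2[OF that]] mmul_add_left mmul_add_right tr_add
      TXX_def TXZ_def TZX_def TYY_def Z_def L_ZZ[OF A_inv] by (simp only: add.assoc)
  have H2: "Ht n m hf tau \<Gamma> (mmul m A' A) (mmul m Ainv A'inv) i s
     = tau s (\<Sum>q<n. \<Gamma> i q * (t q + u q)) + hf * (\<Sum>q<n. \<Gamma> i q * (TXX q + TXZ q + TZX q + TYY q))"
  proof -
    have "Ht n m hf tau \<Gamma> (mmul m A' A) (mmul m Ainv A'inv) i s
      = tau s (\<Sum>q<n. \<Gamma> i q * tr m (Xm m (tau q) (mmul m Ainv A'inv) (mmul m A' A)))
        + hf * (\<Sum>q<n. \<Gamma> i q * tr m (mmul m (Xm m (tau s) (mmul m Ainv A'inv) (mmul m A' A)) (Xm m (tau q) (mmul m Ainv A'inv) (mmul m A' A))))"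
      unfolding HtE Xm_def by (rule refl)
    also have "(\<Sum>q<n. \<Gamma> i q * tr m (Xm m (tau q) (mmul m Ainv A'inv) (mmul m A' A))) = (\<Sum>q<n. \<Gamma> i q * (t q + u q))"
      by (rule sum.cong[OF refl]) (simp add: trX2)
    also have "(\<Sum>q<n. \<Gamma> i q * tr m (mmul m (Xm m (tau s) (mmul m Ainv A'inv) (mmul m A' A)) (Xm m (tau q) (mmul m Ainv A'inv) (mmul m A' A))))
       = (\<Sum>q<n. \<Gamma> i q * (TXX q + TXZ q + TZX q + TYY q))"
      by (rule sum.cong[OF refl]) (simp only: trXX2 lessThan_iff)
    finally show ?thesis .
  qed
  define Xi where "Xi = Xm m (tau'' i) Ainv A"
  define Zi where "Zi = mmul m Ainv (mmul m (Xm m (tau'' i) A'inv A') A)"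
  have Zr: "mmul m Ainv (mmul m (Xm m (tau'' r) A'inv A') A) = (\<lambda>a b. \<Sum>q<n. \<Gamma> r q * Z q a b)" for r
    unfolding tau''_eq Xm_comb mmul_comb_left mmul_comb_right Z_def Y_def ..
  have Xr: "Xm m (tau'' r) Ainv A = (\<lambda>a b. \<Sum>q<n. \<Gamma> r q * X q a b)" for r
    unfolding tau''_eq Xm_comb X_def ..
  have inner: "(\<Sum>a<m. \<Sum>b<m. \<Sum>c<m. \<Sum>d<m.
               A'inv a b * tau'' i (A' b c) * tau'' r (A c d) * Ainv d a
             - A'inv a b * tau'' r (A' b c) * tau'' i (A c d) * Ainv d a)
     = (\<Sum>q<n. \<Gamma> r q * (tr m (mmul m (X q) Zi) - tr m (mmul m (Z q) Xi)))" for r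
  proof -
    have K1: "(\<Sum>a<m. \<Sum>b<m. \<Sum>c<m. \<Sum>d<m. A'inv a b * tau'' i (A' b c) * tau'' r (A c d) * Ainv d a)
       = (\<Sum>q<n. \<Gamma> r q * tr m (mmul m (X q) Zi))"
      unfolding L_K[OF dtau'' dtau'' A_inv A'_inv] L_XZ[OF A_inv] Zi_def[symmetric] Xr mmul_comb_left tr_comb ..
    have K2: "(\<Sum>a<m. \<Sum>b<m. \<Sum>c<m. \<Sum>d<m. A'inv a b * tau'' r (A' b c) * tau'' i (A c d) * Ainv d a)
       = (\<Sum>q<n. \<Gamma> r q * tr m (mmul m (Z q) Xi))"
      unfolding L_K[OF dtau'' dtau'' A_inv A'_inv] L_XZ[OF A_inv] Xi_def[symmetric]
      by (subst tr_comm) (simp only: Zr mmul_comb_left tr_comb)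
    show ?thesis
      by (simp only: sum_subtractf K1 K2 right_diff_distrib)
  qed
  have RHS: "(\<Sum>r<n. hf *
           (\<Sum>a<m. \<Sum>b<m. \<Sum>c<m. \<Sum>d<m.
               A'inv a b * tau'' i (A' b c) * tau'' r (A c d) * Ainv d a
             - A'inv a b * tau'' r (A' b c) * tau'' i (A c d) * Ainv d a)
           * w'' r s) = hf * ((\<Sum>q<n. \<Gamma> i q * TXZ q) - (\<Sum>q<n. \<Gamma> i q * TZX q))"
  proof -
    have "(\<Sum>r<n. hf *
           (\<Sum>a<m. \<Sum>b<m. \<Sum>c<m. \<Sum>d<m.
               A'inv a b * tau'' i (A' b c) * tau'' r (A c d) * Ainv d a
             - A'inv a b * tau'' r (A' b c) * tau'' i (A c d) * Ainv d a)
           * w'' r s)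
       = (\<Sum>r<n. (\<Sum>q<n. \<Gamma> r q * (hf * (tr m (mmul m (X q) Zi) - tr m (mmul m (Z q) Xi)))) * w'' r s)"
      unfolding inner C4[of hf] ..
    also have "\<dots> = hf * (tr m (mmul m (X s) Zi) - tr m (mmul m (Z s) Xi))"
      by (rule C2[OF s]) (rule w''d)
    also have "tr m (mmul m (X s) Zi) = (\<Sum>q<n. \<Gamma> i q * TXZ q)"
      unfolding Zi_def Zr mmul_comb_right tr_comb TXZ_def ..
    also have "tr m (mmul m (Z s) Xi) = (\<Sum>q<n. \<Gamma> i q * TZX q)"
      unfolding Xi_def Xr mmul_comb_right tr_comb TZX_def ..
    finally show ?thesis .
  qed
  have split1: "tau s (\<Sum>q<n. \<Gamma> i q * (t q + u q)) = tau s (\<Sum>q<n. \<Gamma> i q * t q) + tau s (\<Sum>q<n. \<Gamma> i q * u q)"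
    by (simp only: distrib_left sum.distrib der_add[OF dtau[OF s]])
  have split2: "(\<Sum>q<n. \<Gamma> i q * (TXX q + TXZ q + TZX q + TYY q))
     = (\<Sum>q<n. \<Gamma> i q * TXX q) + (\<Sum>q<n. \<Gamma> i q * TXZ q) + (\<Sum>q<n. \<Gamma> i q * TZX q) + (\<Sum>q<n. \<Gamma> i q * TYY q)"
    by (simp only: distrib_left sum.distrib)
  show ?thesis
    unfolding Let_def hf_def[symmetric] tau'_def[symmetric] tau''_def[symmetric] \<Gamma>_def[symmetric]
    unfolding T1 T2 T3 T4 H2 RHS split1 split2
    by (rule fin[OF T12 hf2])
qed

end
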